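(* If $V\subseteq\mathbb{R}$ is a Vitali set then $\mathbb{R}_V=\mathbb{R}$. If $M\subseteq\mathbb{R}$ is a multiplicative Vitali set then $\mathbb{R}_M=\mathbb{R}$.
   Context: A Vitali set is $V\subseteq\mathbb{R}$ such that for every $r\in\mathbb{R}$ there is $x\in V$ with $x-r\in\mathbb{Q}$, and for distinct $x,y\in V$, $x-y\notin\mathbb{Q}$. A multiplicative Vitali set is $M\subseteq\mathbb{R}$ such that for every $r\in\mathbb{R}\setminus\{0\}$ there is $x\in M$ with $x/r\in\mathbb{Q}$, and for distinct $x,y\in M$, $x/y\notin\mathbb{Q}$. For $A\subseteq\mathbb{R}$, $\mathbb{R}_A$ is the set of all reals Turing equivalent to some element of $A$. *)

theory Defs
  imports Complex_Main "HOL-Library.Nat_Bijection"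
begin

text \<open>Total functions nat^n -> nat that are recursive relative to an oracle A \<subseteq> nat
  (Kleene: closure of zero, successor, projections and the oracle's characteristic
  function under composition, primitive recursion and regular minimisation).
  A function of arity n is represented as nat list \<Rightarrow> nat, only its values on lists
  of length n matter.\<close>

inductive oracle_rec :: "nat set \<Rightarrow> nat \<Rightarrow> (nat list \<Rightarrow> nat) \<Rightarrow> bool" for A :: "nat set" where
  zero: "oracle_rec A n (\<lambda>xs. 0)"
| succ: "oracle_rec A 1 (\<lambda>xs. Suc (hd xs))"
| proj: "i < n \<Longrightarrow> oracle_rec A n (\<lambda>xs. xs ! i)"
| orac: "oracle_rec A 1 (\<lambda>xs. if hd xs \<in> A then 1 else 0)"
| comp: "oracle_rec A m g \<Longrightarrow> (\<forall>i<m. oracle_rec A n (hs i)) \<Longrightarrow>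
         oracle_rec A n (\<lambda>xs. g (map (\<lambda>i. hs i xs) [0..<m]))"
| prim: "oracle_rec A n g \<Longrightarrow> oracle_rec A (Suc (Suc n)) h \<Longrightarrow>
         oracle_rec A (Suc n) (\<lambda>xs. rec_nat (g (tl xs)) (\<lambda>y r. h (y # r # tl xs)) (hd xs))"
| mu:   "oracle_rec A (Suc n) g \<Longrightarrow> (\<forall>xs. length xs = n \<longrightarrow> (\<exists>y. g (y # xs) = 0)) \<Longrightarrow>
         oracle_rec A n (\<lambda>xs. LEAST y. g (y # xs) = 0)"
| ext:  "oracle_rec A n f \<Longrightarrow> (\<forall>xs. length xs = n \<longrightarrow> f' xs = f xs) \<Longrightarrow> oracle_rec A n f'"

definition turing_reducible :: "nat set \<Rightarrow> nat set \<Rightarrow> bool" where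
  "turing_reducible B A \<longleftrightarrow> oracle_rec A 1 (\<lambda>xs. if hd xs \<in> B then 1 else 0)"

definition rat_code :: "nat \<Rightarrow> real" where
  "rat_code n = real_of_int (int_decode (fst (prod_decode n))) / (real (snd (prod_decode n)) + 1)"

definition real_cut :: "real \<Rightarrow> nat set" where
  "real_cut x = {n. rat_code n < x}"

definition turing_equiv_real :: "real \<Rightarrow> real \<Rightarrow> bool" where
  "turing_equiv_real x y \<longleftrightarrow>
     turing_reducible (real_cut x) (real_cut y) \<and> turing_reducible (real_cut y) (real_cut x)"

definition reals_of :: "real set \<Rightarrow> real set" where
  "reals_of A = {y. \<exists>x\<in>A. turing_equiv_real y x}"

definition vitali_set :: "real set \<Rightarrow> bool" where
  "vitali_set V \<longleftrightarrow> (\<forall>r. \<exists>x\<in>V. x - r \<in> \<rat>) \<and>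
                     (\<forall>x\<in>V. \<forall>y\<in>V. x \<noteq> y \<longrightarrow> x - y \<notin> \<rat>)"

definition mult_vitali_set :: "real set \<Rightarrow> bool" where
  "mult_vitali_set M \<longleftrightarrow> M \<subseteq> - {0} \<and> (\<forall>r. r \<noteq> 0 \<longrightarrow> (\<exists>x\<in>M. x / r \<in> \<rat>)) \<and>
                     (\<forall>x\<in>M. \<forall>y\<in>M. x \<noteq> y \<longrightarrow> x / y \<notin> \<rat>)"

end

theory Submission
  imports Defs
begin

lemma rc_const: "oracle_rec A n (\<lambda>xs. c)"
proof (induction c)
  case 0 show ?case by (rule oracle_rec.zero)
next
  case (Suc c)
  have "oracle_rec A n (\<lambda>xs. (\<lambda>ys. Suc (hd ys)) (map (\<lambda>i. (\<lambda>xs. c) xs) [0..<1]))"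
    by (rule oracle_rec.comp[OF oracle_rec.succ]) (use Suc in simp)
  then show ?case by simp
qed

lemma rc_op1:
  assumes "oracle_rec A 1 (\<lambda>xs. g (hd xs))" "oracle_rec A n h"
  shows "oracle_rec A n (\<lambda>xs. g (h xs))"
proof -
  have "oracle_rec A n (\<lambda>xs. (\<lambda>ys. g (hd ys)) (map (\<lambda>i. h xs) [0..<1]))"
    by (rule oracle_rec.comp[OF assms(1)]) (use assms(2) in \<open>simp add: numeral_2_eq_2 numeral_3_eq_3\<close>)
  then show ?thesis by simp
qed

lemma rc_op2:
  assumes "oracle_rec A 2 (\<lambda>xs. g (xs!0) (xs!1))" "oracle_rec A n h1" "oracle_rec A n h2"
  shows "oracle_rec A n (\<lambda>xs. g (h1 xs) (h2 xs))"
proof -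
  have "oracle_rec A n (\<lambda>xs. (\<lambda>ys. g (ys!0) (ys!1)) (map (\<lambda>i. (if i = 0 then h1 else h2) xs) [0..<2]))"
    by (rule oracle_rec.comp[OF assms(1)]) (use assms(2,3) in simp)
  then show ?thesis by (simp add: upt_rec)
qed

lemma rc_hd: "oracle_rec A 1 (\<lambda>xs. hd xs)"
  by (rule oracle_rec.ext[OF oracle_rec.proj[of 0 1]]) (auto simp: length_Suc_conv)

lemma rc_prim1:
  assumes "oracle_rec A 2 (\<lambda>xs. h (xs!0) (xs!1))"
  shows "oracle_rec A 1 (\<lambda>xs. rec_nat c h (hd xs))"
proof -
  have "oracle_rec A (Suc 0) (\<lambda>xs. rec_nat ((\<lambda>_. c) (tl xs)) (\<lambda>y r. (\<lambda>xs. h (xs!0) (xs!1)) (y # r # tl xs)) (hd xs))"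
    by (rule oracle_rec.prim[OF rc_const]) (use assms in \<open>simp add: numeral_2_eq_2\<close>)
  then show ?thesis by simp
qed

lemma rc_prim2:
  assumes "oracle_rec A 1 (\<lambda>xs. g (hd xs))" "oracle_rec A 3 (\<lambda>xs. h (xs!0) (xs!1) (xs!2))"
  shows "oracle_rec A 2 (\<lambda>xs. rec_nat (g (xs!1)) (\<lambda>y r. h y r (xs!1)) (xs!0))"
proof -
  have "oracle_rec A (Suc 1) (\<lambda>xs. rec_nat ((\<lambda>xs. g (hd xs)) (tl xs)) (\<lambda>y r. (\<lambda>xs. h (xs!0) (xs!1) (xs!2)) (y # r # tl xs)) (hd xs))"
    by (rule oracle_rec.prim[OF assms(1)]) (use assms(2) in \<open>simp add: numeral_2_eq_2 numeral_3_eq_3\<close>)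
  then show ?thesis unfolding numeral_2_eq_2 One_nat_def
    by (rule oracle_rec.ext) (auto simp: length_Suc_conv)
qed

lemma rc_mu1:
  assumes "oracle_rec A 2 (\<lambda>xs. g (xs!0) (xs!1))" "\<And>x. \<exists>y. g y x = 0"
  shows "oracle_rec A 1 (\<lambda>xs. LEAST y. g y (hd xs) = 0)"
proof -
  have "oracle_rec A 1 (\<lambda>xs. LEAST y. (\<lambda>xs. g (xs!0) (xs!1)) (y # xs) = 0)"
    by (rule oracle_rec.mu) (use assms in \<open>auto simp: numeral_2_eq_2 length_Suc_conv\<close>)
  then show ?thesis
    by (rule oracle_rec.ext) (auto simp: length_Suc_conv)
qed

lemmas rc_proj = oracle_rec.proj

lemma rc_suc: "oracle_rec A n f \<Longrightarrow> oracle_rec A n (\<lambda>xs. Suc (f xs))"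
  using rc_op1[of A Suc, OF oracle_rec.succ] .

lemma rc_ext2: "oracle_rec A 2 f \<Longrightarrow> (\<And>a b. f' [a,b] = f [a,b]) \<Longrightarrow> oracle_rec A 2 f'"
  by (rule oracle_rec.ext) (auto simp: length_Suc_conv numeral_2_eq_2)

lemma rc_ext1: "oracle_rec A 1 f \<Longrightarrow> (\<And>a. f' [a] = f [a]) \<Longrightarrow> oracle_rec A 1 f'"
  by (rule oracle_rec.ext) (auto simp: length_Suc_conv)

lemma rn_add: "rec_nat p (\<lambda>y r. Suc r) x = x + p" by (induction x) auto
lemma rn_mult: "rec_nat 0 (\<lambda>y r. r + p) x = x * p" by (induction x) auto
lemma rn_sub: "rec_nat p (\<lambda>y r. r - 1) x = p - x" by (induction x) auto
lemma rn_pred: "rec_nat 0 (\<lambda>y r. y) x = x - 1" by (induction x) auto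
lemma rn_tri: "rec_nat 0 (\<lambda>y r. r + Suc y) x = triangle x" by (induction x) auto
lemma rn_mod2: "rec_nat 0 (\<lambda>y r. 1 - r) x = x mod 2" by (induction x) (auto simp: mod_Suc)
lemma rn_div2: "rec_nat 0 (\<lambda>y r. r + y mod 2) x = x div 2"
  by (induction x) (auto simp: div_Suc mod_Suc)

lemma add2: "oracle_rec A 2 (\<lambda>xs. xs!0 + xs!1)"
proof -
  have "oracle_rec A 2 (\<lambda>xs. rec_nat ((\<lambda>a. a) (xs!1)) (\<lambda>y r. (\<lambda>a b c. Suc b) y r (xs!1)) (xs!0))"
    by (rule rc_prim2[OF rc_hd]) (rule rc_suc[OF rc_proj], simp)
  then show ?thesis by (rule rc_ext2) (simp add: rn_add[simplified])
qed

lemma rc_add: "oracle_rec A n f \<Longrightarrow> oracle_rec A n g \<Longrightarrow> oracle_rec A n (\<lambda>xs. f xs + g xs)"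
  using rc_op2[of A "(+)", OF add2] .

lemma mult2: "oracle_rec A 2 (\<lambda>xs. xs!0 * xs!1)"
proof -
  have "oracle_rec A 2 (\<lambda>xs. rec_nat ((\<lambda>a. 0) (xs!1)) (\<lambda>y r. (\<lambda>a b c. b + c) y r (xs!1)) (xs!0))"
    by (rule rc_prim2) (auto intro!: rc_const rc_add rc_proj)
  then show ?thesis by (rule rc_ext2) (simp add: rn_mult[simplified])
qed

lemma rc_mult: "oracle_rec A n f \<Longrightarrow> oracle_rec A n g \<Longrightarrow> oracle_rec A n (\<lambda>xs. f xs * g xs)"
  using rc_op2[of A "(*)", OF mult2] .

lemma pred1: "oracle_rec A 1 (\<lambda>xs. hd xs - 1)"
proof -
  have "oracle_rec A 1 (\<lambda>xs. rec_nat 0 (\<lambda>y r. y) (hd xs))"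
    by (rule rc_prim1) (auto intro!: rc_proj)
  then show ?thesis by (rule rc_ext1) (simp add: rn_pred[simplified])
qed

lemma rc_pred: "oracle_rec A n f \<Longrightarrow> oracle_rec A n (\<lambda>xs. f xs - 1)"
  using rc_op1[of A "\<lambda>a. a - 1", OF pred1] .

lemma sub2: "oracle_rec A 2 (\<lambda>xs. xs!1 - xs!0)"
proof -
  have "oracle_rec A 2 (\<lambda>xs. rec_nat ((\<lambda>a. a) (xs!1)) (\<lambda>y r. (\<lambda>a b c. b - 1) y r (xs!1)) (xs!0))"
    by (rule rc_prim2[OF rc_hd]) (rule rc_pred[OF rc_proj], simp)
  then show ?thesis by (rule rc_ext2) (simp add: rn_sub[simplified])
qed

lemma rc_sub: "oracle_rec A n f \<Longrightarrow> oracle_rec A n g \<Longrightarrow> oracle_rec A n (\<lambda>xs. f xs - g xs)"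
  using rc_op2[of A "\<lambda>a b. b - a", OF sub2, of n g f] by simp

lemma tri1: "oracle_rec A 1 (\<lambda>xs. triangle (hd xs))"
proof -
  have "oracle_rec A 1 (\<lambda>xs. rec_nat 0 (\<lambda>y r. r + Suc y) (hd xs))"
    by (rule rc_prim1) (auto intro!: rc_proj rc_add rc_suc)
  then show ?thesis by (rule rc_ext1) (simp add: rn_tri[simplified])
qed

lemma rc_tri: "oracle_rec A n f \<Longrightarrow> oracle_rec A n (\<lambda>xs. triangle (f xs))"
  using rc_op1[of A triangle, OF tri1] .

lemma mod2_1: "oracle_rec A 1 (\<lambda>xs. hd xs mod 2)"
proof -
  have "oracle_rec A 1 (\<lambda>xs. rec_nat 0 (\<lambda>y r. 1 - r) (hd xs))"
    by (rule rc_prim1) (auto intro!: rc_proj rc_sub rc_const)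
  then show ?thesis by (rule rc_ext1) (simp add: rn_mod2[simplified])
qed

lemma rc_mod2: "oracle_rec A n f \<Longrightarrow> oracle_rec A n (\<lambda>xs. f xs mod 2)"
  using rc_op1[of A "\<lambda>a. a mod 2", OF mod2_1] .

lemma div2_1: "oracle_rec A 1 (\<lambda>xs. hd xs div 2)"
proof -
  have "oracle_rec A 1 (\<lambda>xs. rec_nat 0 (\<lambda>y r. r + y mod 2) (hd xs))"
    by (rule rc_prim1) (auto intro!: rc_proj rc_add rc_mod2)
  then show ?thesis by (rule rc_ext1) (simp add: rn_div2[simplified])
qed

lemma rc_div2: "oracle_rec A n f \<Longrightarrow> oracle_rec A n (\<lambda>xs. f xs div 2)"
  using rc_op1[of A "\<lambda>a. a div 2", OF div2_1] .

definition diag :: "nat \<Rightarrow> nat" where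
  "diag n = (LEAST s. Suc n - triangle (Suc s) = 0)"

lemma diag1: "oracle_rec A 1 (\<lambda>xs. diag (hd xs))"
proof -
  have "oracle_rec A 1 (\<lambda>xs. LEAST y. (\<lambda>y x. Suc x - triangle (Suc y)) y (hd xs) = 0)"
  proof (rule rc_mu1)
    show "oracle_rec A 2 (\<lambda>xs. Suc (xs ! 1) - triangle (Suc (xs ! 0)))"
      by (intro rc_sub rc_suc rc_tri rc_proj) auto
    fix x show "\<exists>y. Suc x - triangle (Suc y) = 0"
      by (rule exI[of _ x]) simp
  qed
  then show ?thesis by (simp add: diag_def)
qed

lemma rc_diag: "oracle_rec A n f \<Longrightarrow> oracle_rec A n (\<lambda>xs. diag (f xs))"
  using rc_op1[of A diag, OF diag1] .

lemma triangle_mono: "a \<le> b \<Longrightarrow> triangle a \<le> triangle b"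
  by (induction b) (auto simp: le_Suc_eq)

lemma diag_eq: "diag n = fst (prod_decode n) + snd (prod_decode n)"
proof -
  obtain a b where ab: "prod_decode n = (a, b)" by (cases "prod_decode n")
  have n: "n = triangle (a + b) + a"
    using prod_decode_inverse[of n] by (simp add: ab prod_encode_def)
  have "(LEAST s. Suc n - triangle (Suc s) = 0) = a + b"
  proof (rule Least_equality)
    show "Suc n - triangle (Suc (a + b)) = 0" using n by simp
    fix s assume "Suc n - triangle (Suc s) = 0"
    then have "n < triangle (Suc s)" by simp
    show "a + b \<le> s"
    proof (rule ccontr)
      assume "\<not> a + b \<le> s"
      then have "triangle (Suc s) \<le> triangle (a + b)" by (intro triangle_mono) simp
      with \<open>n < triangle (Suc s)\<close> n show False by simp
    qed
  qed
  then show ?thesis by (simp add: diag_def ab)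
qed

lemma pd_eq: "fst (prod_decode n) = n - triangle (diag n)"
  "snd (prod_decode n) = diag n - (n - triangle (diag n))"
proof -
  obtain a b where ab: "prod_decode n = (a, b)" by (cases "prod_decode n")
  have n: "n - triangle (a + b) = a"
    using prod_decode_inverse[of n] by (simp add: ab prod_encode_def)
  show "fst (prod_decode n) = n - triangle (diag n)"
    "snd (prod_decode n) = diag n - (n - triangle (diag n))"
    by (simp_all add: diag_eq ab n)
qed

lemma rc_orac: "oracle_rec A n f \<Longrightarrow> oracle_rec A n (\<lambda>xs. if f xs \<in> A then 1 else 0)"
  using rc_op1[of A "\<lambda>a. if a \<in> A then 1 else 0", OF oracle_rec.orac] .

definition tf :: "nat \<Rightarrow> nat \<Rightarrow> nat \<Rightarrow> nat \<Rightarrow> nat \<Rightarrow> nat \<Rightarrow> nat" where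
  "tf K L M pc nc n = (let a = n - triangle (diag n); w = Suc (diag n - a);
     pu = (1 - a mod 2) * (a div 2); nu = a mod 2 * (a div 2 + 1);
     P = pu * K + pc * L * w; Nn = nu * K + nc * L * w;
     E = (1 - (Nn - P)) * (2 * (P - Nn)) + (1 - (1 - (Nn - P))) * (2 * (Nn - P) - 1);
     Y = w * M - 1 in triangle (E + Y) + E)"

lemma rc_tf: "oracle_rec A 1 (\<lambda>xs. tf K L M pc nc (hd xs))"
  unfolding tf_def Let_def
  by (intro rc_add rc_mult rc_sub rc_suc rc_tri rc_diag rc_mod2 rc_div2 rc_const rc_hd)

lemma int_decode_split: "int_decode a = int ((1 - a mod 2) * (a div 2)) - int (a mod 2 * (a div 2 + 1))"
proof (cases "even a")
  case True
  then have "a mod 2 = 0" by presburger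
  with True show ?thesis by (simp add: int_decode_def sum_decode_def)
next
  case False
  then have "a mod 2 = 1" by presburger
  with False show ?thesis by (simp add: int_decode_def sum_decode_def)
qed

lemma int_encode_split: "int_encode (int P - int Nn) =
   (1 - (Nn - P)) * (2 * (P - Nn)) + (1 - (1 - (Nn - P))) * (2 * (Nn - P) - 1)"
  by (cases "Nn \<le> P") (auto simp: int_encode_def sum_encode_def nat_diff_distrib)

lemma rat_code_tf:
  assumes "M > 0"
  shows "rat_code (tf K L M pc nc n) = rat_code n * K / M + (real pc - real nc) * L / M"
proof -
  define a where "a = n - triangle (diag n)"
  define b where "b = diag n - a"
  have ab: "a = fst (prod_decode n)" "b = snd (prod_decode n)"
    by (simp_all add: a_def b_def pd_eq)
  define pu where "pu = (1 - a mod 2) * (a div 2)"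
  define nu where "nu = a mod 2 * (a div 2 + 1)"
  define w where "w = Suc b"
  define P where "P = pu * K + pc * L * w"
  define Nn where "Nn = nu * K + nc * L * w"
  define E where "E = int_encode (int P - int Nn)"
  have w: "w > 0" by (simp add: w_def)
  have Y: "Suc (w * M - 1) = w * M" using w assms by simp
  have tfe: "tf K L M pc nc n = prod_encode (E, w * M - 1)"
  proof -
    have E: "E = (1 - (Nn - P)) * (2 * (P - Nn)) + (1 - (1 - (Nn - P))) * (2 * (Nn - P) - 1)"
      by (simp only: E_def int_encode_split)
    show ?thesis
      unfolding tf_def Let_def a_def[symmetric] b_def[symmetric] pu_def[symmetric] nu_def[symmetric]
        w_def[symmetric] P_def[symmetric] Nn_def[symmetric] E[symmetric]
      by (simp add: prod_encode_def)
  qed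
  have ud: "int_decode a = int pu - int nu" by (simp add: int_decode_split pu_def nu_def)
  have rn: "rat_code n = (real pu - real nu) / w"
    by (simp add: rat_code_def ab[symmetric] ud w_def)
  have r1: "real (w * M - 1) + 1 = real w * real M"
  proof -
    have "real (w * M - 1) + 1 = real (Suc (w * M - 1))" by simp
    also have "\<dots> = real w * real M" by (simp only: Y of_nat_mult)
    finally show ?thesis .
  qed
  have "rat_code (tf K L M pc nc n) = real_of_int (int P - int Nn) / (real (w * M - 1) + 1)"
    unfolding tfe by (simp add: rat_code_def E_def)
  also have "\<dots> = (real P - real Nn) / (w * M)" by (simp only: r1) simp
  also have "\<dots> = rat_code n * K / M + (real pc - real nc) * L / M"
  proof -
    have "real w > 0" "real M > 0" using w assms by auto
    then show ?thesis
      unfolding rn P_def Nn_def of_nat_add of_nat_mult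
      by (simp add: divide_simps) (simp add: algebra_simps)
  qed
  finally show ?thesis .
qed

lemma red:
  assumes "oracle_rec A 1 (\<lambda>xs. g (hd xs))" "\<And>n. n \<in> B \<longleftrightarrow> g n \<in> A"
  shows "turing_reducible B A"
  unfolding turing_reducible_def using rc_orac[OF assms(1)] by (simp add: assms(2))

lemma rc_trans_gen:
  assumes "oracle_rec B n f" "oracle_rec A 1 (\<lambda>xs. if hd xs \<in> B then 1 else 0)"
  shows "oracle_rec A n f"
  using assms(1)
proof (induction rule: oracle_rec.induct)
  case zero show ?case by (rule oracle_rec.zero)
next
  case succ show ?case by (rule oracle_rec.succ)
next
  case (proj i n) then show ?case by (rule oracle_rec.proj)
next
  case orac show ?case by (rule assms(2))
next
  case (comp m g n hs) then show ?case by (auto intro: oracle_rec.comp)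
next
  case (prim n g h) then show ?case by (auto intro: oracle_rec.prim)
next
  case (mu n g) then show ?case by (auto intro: oracle_rec.mu)
next
  case (ext n f f') then show ?case by (auto intro: oracle_rec.ext)
qed

lemma tr_trans: "turing_reducible C B \<Longrightarrow> turing_reducible B A \<Longrightarrow> turing_reducible C A"
  unfolding turing_reducible_def by (rule rc_trans_gen)

lemma tr_refl: "turing_reducible A A"
  unfolding turing_reducible_def by (rule oracle_rec.orac)

lemma affine_red:
  assumes "\<alpha> > 0" "\<alpha> \<in> \<rat>" "\<beta> \<in> \<rat>"
  shows "turing_reducible (real_cut (\<alpha> * y + \<beta>)) (real_cut y)"
proof -
  have "1 / \<alpha> \<in> \<rat>" using assms by simp
  then obtain a1 b1 where b1: "b1 > 0" and e1: "1 / \<alpha> = of_int a1 / of_int b1"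
    by (elim Rats_cases') blast
  have a1: "a1 > 0"
  proof -
    have "of_int a1 / of_int b1 > (0::real)" using e1[symmetric] assms(1) by simp
    then show ?thesis using b1 by (simp add: zero_less_divide_iff)
  qed
  have "- \<beta> / \<alpha> \<in> \<rat>" using assms by simp
  then obtain a2 b2 where b2: "b2 > 0" and e2: "- \<beta> / \<alpha> = of_int a2 / of_int b2"
    by (elim Rats_cases') blast
  define K where "K = nat (a1 * b2)"
  define M where "M = nat (b1 * b2)"
  define L where "L = nat b1"
  define pc where "pc = nat a2"
  define nc where "nc = nat (- a2)"
  have M: "M > 0" using b1 b2 by (simp add: M_def)
  have KM: "real K / real M = 1 / \<alpha>"
    using a1 b1 b2 by (simp add: K_def M_def e1)
  have cLM: "(real pc - real nc) * real L / real M = - \<beta> / \<alpha>"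
  proof -
    have "real (nat a2) - real (nat (- a2)) = of_int a2" by (cases "a2 \<ge> 0") auto
    then show ?thesis using b1 b2 by (simp add: pc_def nc_def L_def M_def e2[symmetric])
  qed
  have key: "rat_code (tf K L M pc nc n) = (rat_code n - \<beta>) / \<alpha>" for n
  proof -
    have "rat_code (tf K L M pc nc n) = rat_code n * (real K / real M) + (real pc - real nc) * real L / real M"
      using rat_code_tf[OF M, of K L pc nc n] by simp
    also have "\<dots> = rat_code n * (1 / \<alpha>) + - \<beta> / \<alpha>" by (simp only: KM cLM)
    finally show ?thesis by (simp add: diff_divide_distrib)
  qed
  show ?thesis
  proof (rule red[OF rc_tf[of _ K L M pc nc]])
    fix n
    show "n \<in> real_cut (\<alpha> * y + \<beta>) \<longleftrightarrow> tf K L M pc nc n \<in> real_cut y"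
      unfolding real_cut_def using assms(1) by (simp add: key pos_divide_less_eq algebra_simps)
  qed
qed

lemma rat_code_neg0: "rat_code n < 0 \<longleftrightarrow> (n - triangle (diag n)) mod 2 = 1"
proof -
  define a where "a = n - triangle (diag n)"
  have "rat_code n < 0 \<longleftrightarrow> int_decode a < 0"
    by (simp add: rat_code_def a_def pd_eq divide_less_0_iff add_pos_nonneg)
  also have "\<dots> \<longleftrightarrow> a mod 2 = 1"
    by (cases "even a") (auto simp: int_decode_def sum_decode_def, presburger+)
  finally show ?thesis by (simp add: a_def)
qed

lemma cut0_red: "turing_reducible (real_cut 0) A"
proof -
  have "oracle_rec A 1 (\<lambda>xs. (hd xs - triangle (diag (hd xs))) mod 2)"
    by (intro rc_mod2 rc_sub rc_tri rc_diag rc_hd)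
  moreover have "(\<lambda>xs. (hd xs - triangle (diag (hd xs))) mod 2) = (\<lambda>xs. if hd xs \<in> real_cut 0 then 1 else 0)"
  proof
    fix xs :: "nat list"
    show "(hd xs - triangle (diag (hd xs))) mod 2 = (if hd xs \<in> real_cut 0 then 1 else 0)"
      unfolding real_cut_def using rat_code_neg0[of "hd xs"] by auto
  qed
  ultimately show ?thesis unfolding turing_reducible_def by simp
qed

lemma rat_red: "x \<in> \<rat> \<Longrightarrow> turing_reducible (real_cut x) A"
  using affine_red[of 1 x 0] cut0_red[of A] tr_trans by simp

definition negc :: "nat \<Rightarrow> nat" where
  "negc n = (let a = n - triangle (diag n); b = diag n - a;
     a' = a mod 2 * (a + 1) + (1 - a mod 2) * (a - 1) in triangle (a' + b) + a')"

lemma int_decode_neg: "int_decode (a mod 2 * (a + 1) + (1 - a mod 2) * (a - 1)) = - int_decode a"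
proof (cases "even a")
  case True
  then obtain k where k: "a = 2 * k" by (elim evenE)
  show ?thesis
  proof (cases k)
    case 0 then show ?thesis using k by (simp add: int_decode_def sum_decode_def)
  next
    case (Suc j)
    then have "2 * k - 1 = Suc (2 * j)" by simp
    then show ?thesis using k by (simp add: int_decode_def sum_decode_def Suc)
  qed
next
  case False
  then obtain k where k: "a = Suc (2 * k)" by (metis oddE Suc_eq_plus1)
  have "Suc (Suc (2 * k)) = 2 * Suc k" by simp
  then show ?thesis using k by (simp add: int_decode_def sum_decode_def)
qed

lemma rat_code_negc: "rat_code (negc n) = - rat_code n"
proof -
  define a where "a = n - triangle (diag n)"
  define b where "b = diag n - a"
  define a' where "a' = a mod 2 * (a + 1) + (1 - a mod 2) * (a - 1)"
  have ab: "a = fst (prod_decode n)" "b = snd (prod_decode n)"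
    by (simp_all add: a_def b_def pd_eq)
  have "negc n = prod_encode (a', b)"
    unfolding negc_def Let_def a_def[symmetric] b_def[symmetric] a'_def[symmetric]
    by (simp add: prod_encode_def)
  moreover have "int_decode a' = - int_decode a" by (simp only: a'_def int_decode_neg)
  ultimately show ?thesis
    by (simp add: rat_code_def ab[symmetric])
qed

lemma rc_negc: "oracle_rec A 1 (\<lambda>xs. negc (hd xs))"
  unfolding negc_def Let_def
  by (intro rc_add rc_mult rc_sub rc_suc rc_tri rc_diag rc_mod2 rc_const rc_hd)

lemma rat_code_Rats: "rat_code n \<in> \<rat>"
  by (simp add: rat_code_def)

lemma neg_red:
  assumes "y \<notin> \<rat>"
  shows "turing_reducible (real_cut (- y)) (real_cut y)"
proof -
  have "oracle_rec (real_cut y) 1 (\<lambda>xs. 1 - (if negc (hd xs) \<in> real_cut y then 1 else 0))"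
    by (intro rc_sub rc_const rc_orac rc_negc)
  moreover have "(\<lambda>xs. 1 - (if negc (hd xs) \<in> real_cut y then 1 else 0::nat)) = (\<lambda>xs. if hd xs \<in> real_cut (- y) then 1 else 0)"
  proof
    fix xs :: "nat list"
    have "rat_code (hd xs) \<noteq> - y" using assms rat_code_Rats[of "hd xs"]
      by (metis Rats_minus_iff)
    then show "1 - (if negc (hd xs) \<in> real_cut y then 1 else 0) = (if hd xs \<in> real_cut (- y) then 1 else (0::nat))"
      unfolding real_cut_def by (auto simp: rat_code_negc)
  qed
  ultimately show ?thesis unfolding turing_reducible_def by simp
qed

lemma aff: "\<alpha> > 0 \<Longrightarrow> \<alpha> \<in> \<rat> \<Longrightarrow> \<beta> \<in> \<rat> \<Longrightarrow> z = \<alpha> * y + \<beta> \<Longrightarrow> turing_reducible (real_cut z) (real_cut y)"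
  using affine_red by blast

lemma equivI: "turing_reducible (real_cut y) (real_cut x) \<Longrightarrow> turing_reducible (real_cut x) (real_cut y) \<Longrightarrow> turing_equiv_real y x"
  by (simp add: turing_equiv_real_def)

theorem mainTheorem8:
  shows "(\<forall>V. vitali_set V \<longrightarrow> reals_of V = UNIV) \<and>
         (\<forall>M. mult_vitali_set M \<longrightarrow> reals_of M = UNIV)"
proof (intro conjI allI impI)
  fix V assume V: "vitali_set V"
  show "reals_of V = UNIV"
  proof (rule set_eqI, simp add: reals_of_def)
    fix r
    obtain x where x: "x \<in> V" "x - r \<in> \<rat>" using V unfolding vitali_set_def by blast
    have "turing_equiv_real r x"
    proof (rule equivI)
      show "turing_reducible (real_cut r) (real_cut x)"
        by (rule aff[of 1 "- (x - r)"]) (use x Rats_minus_iff[of "x - r"] in auto)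
      show "turing_reducible (real_cut x) (real_cut r)"
        by (rule aff[of 1 "x - r"]) (use x in auto)
    qed
    then show "\<exists>x\<in>V. turing_equiv_real r x" using x by blast
  qed
next
  fix M assume M: "mult_vitali_set M"
  show "reals_of M = UNIV"
  proof (rule set_eqI, simp add: reals_of_def)
    fix r
    have ratcase: "\<exists>x\<in>M. turing_equiv_real r x" if "r \<in> \<rat>" "\<exists>x\<in>M. x \<in> \<rat>"
      using that by (auto intro!: equivI rat_red)
    show "\<exists>x\<in>M. turing_equiv_real r x"
    proof (cases "r = 0")
      case True
      have "\<forall>r. r \<noteq> 0 \<longrightarrow> (\<exists>x\<in>M. x / r \<in> \<rat>)" using M by (simp add: mult_vitali_set_def)
      then have "\<exists>x\<in>M. x / 1 \<in> \<rat>" by (erule_tac x=1 in allE) simp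
      then have "\<exists>x\<in>M. x \<in> \<rat>" by simp
      moreover have "r \<in> \<rat>" using True by simp
      ultimately show ?thesis by (rule ratcase[rotated])
    next
      case False
      obtain x where x: "x \<in> M" "x / r \<in> \<rat>" using M False unfolding mult_vitali_set_def by blast
      have x0: "x \<noteq> 0" using M x unfolding mult_vitali_set_def by blast
      define q where "q = x / r"
      have q: "q \<in> \<rat>" "q \<noteq> 0" using x x0 False by (simp_all add: q_def)
      have xq: "x = q * r" using False by (simp add: q_def)
      show ?thesis
      proof (cases "r \<in> \<rat>")
        case True
        have "x \<in> \<rat>" unfolding xq using True q by simp
        then show ?thesis using x True by (intro ratcase) blast+
      next
        case rnr: False
        have xnr: "x \<notin> \<rat>"
        proof
          assume "x \<in> \<rat>"
          then have "x / q \<in> \<rat>" using q by simp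
          then show False using rnr xq q by simp
        qed
        have "turing_equiv_real r x"
        proof (cases "q > 0")
          case True
          show ?thesis
          proof (rule equivI)
            show "turing_reducible (real_cut r) (real_cut x)"
              by (rule aff[of "1 / q" 0]) (use True q in \<open>simp_all add: xq\<close>)
            show "turing_reducible (real_cut x) (real_cut r)"
              by (rule aff[of q 0]) (use True q in \<open>simp_all add: xq\<close>)
          qed
        next
          case False
          then have qn: "q < 0" using q by linarith
          show ?thesis
          proof (rule equivI)
            have "turing_reducible (real_cut r) (real_cut (- x))"
              by (rule aff[of "- 1 / q" 0]) (use qn q in \<open>simp_all add: xq divide_neg_pos\<close>)
            then show "turing_reducible (real_cut r) (real_cut x)"
              using neg_red[OF xnr] tr_trans by blast
            have "turing_reducible (real_cut x) (real_cut (- r))"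
              by (rule aff[of "- q" 0]) (use qn q in \<open>simp_all add: xq\<close>)
            then show "turing_reducible (real_cut x) (real_cut r)"
              using neg_red[OF rnr] tr_trans by blast
          qed
        qed
        then show ?thesis using x by blast
      qed
    qed
  qed
qed

end
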